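(* Let $\alpha\in(0,1]$, $0<\delta<\alpha$, and let $\mathcal{L}$ be the jump uncertainty set defined in the context. For each $\varphi\in C_b^3(\mathbb{R}^d)$ and all $x,x'\in\mathbb{R}^d$, $$\sup_{F_\mu\in\mathcal{L}}\int_{\mathbb{R}^d}\big|\delta^\alpha_\lambda\varphi(x')-\delta^\alpha_\lambda\varphi(x)\big|F_\mu(d\lambda)\le C_\alpha|x'-x|^\delta,$$ where $C_\alpha=\mathcal{K}_\alpha\big(4\|D\varphi\|_\infty^\delta\|\varphi\|_\infty^{1-\delta}+2\|D^3\varphi\|_\infty^\delta\|D^2\varphi\|_\infty^{1-\delta}\big)$ if $\alpha=1$ and $C_\alpha=\mathcal{K}_\alpha\big(4\|D\varphi\|_\infty^\delta\|\varphi\|_\infty^{1-\delta}+2\|D^2\varphi\|_\infty^\delta\|D\varphi\|_\infty^{1-\delta}\big)$ if $\alpha\in(0,1)$.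
   Context: For a symmetric finite measure $\mu$ on the unit sphere $S\subset\mathbb{R}^d$, $F_\mu(B)=\int_S\mu(dz)\int_0^\infty\mathbb{1}_B(rz)r^{-1-\alpha}dr$; given $\underline{\Lambda},\overline{\Lambda}>0$, $\mathcal{L}=\{F_\mu:\mu(S)\in(\underline{\Lambda},\overline{\Lambda})\}$. $\delta^\alpha_\lambda\varphi(x)=\varphi(x+\lambda)-\varphi(x)-\langle D\varphi(x),\lambda\mathbb{1}_{\{|\lambda|\le1\}}\rangle$ for $\alpha=1$ and $\varphi(x+\lambda)-\varphi(x)$ for $\alpha\in(0,1)$. $\mathcal{K}_1=\sup_{F_\mu\in\mathcal{L}}\int(|\lambda|^2\wedge1)F_\mu(d\lambda)$, and $\mathcal{K}_\alpha=\sup_{F_\mu\in\mathcal{L}}\int(|\lambda|\wedge1)F_\mu(d\lambda)$ for $\alpha\in(0,1)$ (these are finite). $C_b^3(\mathbb{R}^d)$: functions with uniformly bounded derivatives up to order 3; $\|\cdot\|_\infty$ is the sup norm. *)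

theory Defs
  imports "HOL-Analysis.Analysis"
begin

definition d1 :: "('a::euclidean_space \<Rightarrow> real) \<Rightarrow> 'a \<Rightarrow> 'a \<Rightarrow> real" where
  "d1 \<phi> x h = frechet_derivative \<phi> (at x) h"

definition d2 :: "('a::euclidean_space \<Rightarrow> real) \<Rightarrow> 'a \<Rightarrow> 'a \<Rightarrow> 'a \<Rightarrow> real" where
  "d2 \<phi> x h k = frechet_derivative (\<lambda>y. d1 \<phi> y h) (at x) k"

definition d3 :: "('a::euclidean_space \<Rightarrow> real) \<Rightarrow> 'a \<Rightarrow> 'a \<Rightarrow> 'a \<Rightarrow> 'a \<Rightarrow> real" where
  "d3 \<phi> x h k l = frechet_derivative (\<lambda>y. d2 \<phi> y h k) (at x) l"

definition Cb3 :: "('a::euclidean_space \<Rightarrow> real) \<Rightarrow> bool" where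
  "Cb3 \<phi> \<longleftrightarrow>
     (\<forall>x. \<phi> differentiable (at x)) \<and>
     (\<forall>h x. (\<lambda>y. d1 \<phi> y h) differentiable (at x)) \<and>
     (\<forall>h k x. (\<lambda>y. d2 \<phi> y h k) differentiable (at x)) \<and>
     (\<forall>h k l. continuous_on UNIV (\<lambda>y. d3 \<phi> y h k l)) \<and>
     bdd_above (range (\<lambda>x. \<bar>\<phi> x\<bar>)) \<and>
     bdd_above {\<bar>d1 \<phi> x h\<bar> | x h. norm h \<le> 1} \<and>
     bdd_above {\<bar>d2 \<phi> x h k\<bar> | x h k. norm h \<le> 1 \<and> norm k \<le> 1} \<and>
     bdd_above {\<bar>d3 \<phi> x h k l\<bar> | x h k l. norm h \<le> 1 \<and> norm k \<le> 1 \<and> norm l \<le> 1}"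

definition sup0 :: "('a::euclidean_space \<Rightarrow> real) \<Rightarrow> real" where
  "sup0 \<phi> = (SUP x. \<bar>\<phi> x\<bar>)"

definition sup1 :: "('a::euclidean_space \<Rightarrow> real) \<Rightarrow> real" where
  "sup1 \<phi> = Sup {\<bar>d1 \<phi> x h\<bar> | x h. norm h \<le> 1}"

definition sup2 :: "('a::euclidean_space \<Rightarrow> real) \<Rightarrow> real" where
  "sup2 \<phi> = Sup {\<bar>d2 \<phi> x h k\<bar> | x h k. norm h \<le> 1 \<and> norm k \<le> 1}"

definition sup3 :: "('a::euclidean_space \<Rightarrow> real) \<Rightarrow> real" where
  "sup3 \<phi> = Sup {\<bar>d3 \<phi> x h k l\<bar> | x h k l. norm h \<le> 1 \<and> norm k \<le> 1 \<and> norm l \<le> 1}"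

definition sym_sphere_measure :: "'a::euclidean_space measure \<Rightarrow> bool" where
  "sym_sphere_measure \<mu> \<longleftrightarrow>
     space \<mu> = sphere 0 1 \<and>
     sets \<mu> = sets (restrict_space borel (sphere 0 1)) \<and>
     emeasure \<mu> (space \<mu>) < \<infinity> \<and>
     (\<forall>B\<in>sets \<mu>. emeasure \<mu> (uminus ` B) = emeasure \<mu> B)"

text \<open>\<open>F_\<mu>(B) = \<integral>\<^sub>S \<mu>(dz) \<integral>\<^sub>0\<^sup>\<infinity> 1_B(r z) r^(-1-\<alpha>) dr\<close>, as the image of
  \<open>\<mu> \<otimes> r^(-1-\<alpha>) 1_(0,\<infinity>) dr\<close> under \<open>(z,r) \<mapsto> r z\<close>.\<close>
definition Fmu :: "real \<Rightarrow> 'a::euclidean_space measure \<Rightarrow> 'a measure" where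
  "Fmu \<alpha> \<mu> = distr (\<mu> \<Otimes>\<^sub>M density lborel (\<lambda>r. ennreal (indicator {0<..} r * r powr (-1-\<alpha>))))
                 borel (\<lambda>p. snd p *\<^sub>R fst p)"

definition Lset :: "real \<Rightarrow> real \<Rightarrow> real \<Rightarrow> 'a::euclidean_space measure set" where
  "Lset \<alpha> \<Lambda>l \<Lambda>u = {Fmu \<alpha> \<mu> | \<mu>. sym_sphere_measure \<mu> \<and>
        ennreal \<Lambda>l < emeasure \<mu> (space \<mu>) \<and> emeasure \<mu> (space \<mu>) < ennreal \<Lambda>u}"

definition Kconst :: "real \<Rightarrow> real \<Rightarrow> real \<Rightarrow> 'a::euclidean_space itself \<Rightarrow> ennreal" where
  "Kconst \<alpha> \<Lambda>l \<Lambda>u _ =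
     (if \<alpha> = 1 then (SUP F\<in>(Lset \<alpha> \<Lambda>l \<Lambda>u :: 'a measure set). \<integral>\<^sup>+ lam. ennreal (min ((norm lam)\<^sup>2) 1) \<partial>F)
      else (SUP F\<in>(Lset \<alpha> \<Lambda>l \<Lambda>u :: 'a measure set). \<integral>\<^sup>+ lam. ennreal (min (norm lam) 1) \<partial>F))"

definition delta_op :: "real \<Rightarrow> ('a::euclidean_space \<Rightarrow> real) \<Rightarrow> 'a \<Rightarrow> 'a \<Rightarrow> real" where
  "delta_op \<alpha> \<phi> lam x =
     (if \<alpha> = 1 then \<phi> (x + lam) - \<phi> x - (if norm lam \<le> 1 then d1 \<phi> x lam else 0)
      else \<phi> (x + lam) - \<phi> x)"

definition Calpha :: "real \<Rightarrow> real \<Rightarrow> ('a::euclidean_space \<Rightarrow> real) \<Rightarrow> real" where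
  "Calpha \<alpha> \<delta> \<phi> =
     (if \<alpha> = 1
      then 4 * sup1 \<phi> powr \<delta> * sup0 \<phi> powr (1 - \<delta>) + 2 * sup3 \<phi> powr \<delta> * sup2 \<phi> powr (1 - \<delta>)
      else 4 * sup1 \<phi> powr \<delta> * sup0 \<phi> powr (1 - \<delta>) + 2 * sup2 \<phi> powr \<delta> * sup1 \<phi> powr (1 - \<delta>))"

end

theory Submission
  imports Defs
begin

lemma mvt:
  fixes f :: "'a::euclidean_space \<Rightarrow> real"
  assumes "convex S" "\<And>y. y \<in> S \<Longrightarrow> (f has_derivative f' y) (at y)"
    "\<And>y v. y \<in> S \<Longrightarrow> \<bar>f' y v\<bar> \<le> B * norm v" "a \<in> S" "b \<in> S"
  shows "\<bar>f a - f b\<bar> \<le> B * norm (a - b)"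
proof -
  have "norm (f a - f b) \<le> B * norm (a - b)"
    by (rule differentiable_bound[where f'=f' and S=S])
      (use assms in \<open>auto intro: has_derivative_at_withinI onorm_le\<close>)
  thus ?thesis by simp
qed

lemma shiftd:
  assumes "\<And>z. (g has_derivative g' z) (at z)"
  shows "((\<lambda>y. g (y + c)) has_derivative g' (y + c)) (at y)"
proof -
  have "((\<lambda>y. y + c) has_derivative (\<lambda>x. x)) (at y)"
    by (intro has_derivative_add_const has_derivative_ident)
  from has_derivative_compose[OF this assms[of "y + c"]] show ?thesis by simp
qed

lemma shiftd2:
  assumes "\<And>z. (g has_derivative g' z) (at z)"
  shows "((\<lambda>y. g (c + y)) has_derivative g' (c + y)) (at y)"
  using shiftd[of g g' c y, OF assms] by (simp add: add.commute)

lemma interp: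
  fixes A B D \<delta> :: real
  assumes "0 \<le> A" "0 \<le> B" "\<bar>D\<bar> \<le> A" "\<bar>D\<bar> \<le> B" "0 < \<delta>" "\<delta> < 1"
  shows "\<bar>D\<bar> \<le> A powr (1 - \<delta>) * B powr \<delta>"
proof -
  have "\<bar>D\<bar> = \<bar>D\<bar> powr (1 - \<delta>) * \<bar>D\<bar> powr \<delta>"
    by (cases "D = 0") (simp_all add: powr_add[symmetric])
  also have "\<dots> \<le> A powr (1 - \<delta>) * B powr \<delta>"
    by (intro mult_mono powr_mono2) (use assms in auto)
  finally show ?thesis .
qed

lemma pw: "0 \<le> (m::real) \<Longrightarrow> m powr (1 - d) * m powr d = m"
  by (simp add: powr_add[symmetric])

lemma c2: "0 \<le> (d::real) \<Longrightarrow> 2 powr (1 - d) \<le> 2"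
  using powr_mono[of "1 - d" 1 "2::real"] by simp

lemma c4: "0 \<le> (d::real) \<Longrightarrow> 4 powr (1 - d) * 2 powr d \<le> 4"
proof -
  assume d: "0 \<le> d"
  have e: "(4::real) powr (1 - d) = 2 powr (2 * (1 - d))"
    by (subst powr_powr[symmetric]) simp
  have "(4::real) powr (1 - d) * 2 powr d = 2 powr (2 * (1 - d) + d)"
    unfolding e by (rule powr_add[symmetric])
  also have "\<dots> = 2 powr (2 - d)" by (rule arg_cong[where f="\<lambda>t. (2::real) powr t"]) simp
  also have "\<dots> \<le> 2 powr 2" using d by (intro powr_mono) auto
  finally show ?thesis by simp
qed


context fixes \<phi> :: "'a::euclidean_space \<Rightarrow> real" assumes cb: "Cb3 \<phi>"
begin

lemma d1_deriv: "(\<phi> has_derivative d1 \<phi> y) (at y)"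
proof -
  have "d1 \<phi> y = frechet_derivative \<phi> (at y)" by (rule ext) (simp add: d1_def)
  thus ?thesis using cb frechet_derivative_works unfolding Cb3_def by metis
qed

lemma d2_deriv: "((\<lambda>z. d1 \<phi> z v) has_derivative d2 \<phi> y v) (at y)"
proof -
  have "d2 \<phi> y v = frechet_derivative (\<lambda>z. d1 \<phi> z v) (at y)" by (rule ext) (simp add: d2_def)
  thus ?thesis using cb frechet_derivative_works unfolding Cb3_def by metis
qed

lemma d3_deriv: "((\<lambda>z. d2 \<phi> z v w) has_derivative d3 \<phi> y v w) (at y)"
proof -
  have "d3 \<phi> y v w = frechet_derivative (\<lambda>z. d2 \<phi> z v w) (at y)" by (rule ext) (simp add: d3_def)
  thus ?thesis using cb frechet_derivative_works unfolding Cb3_def by metis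
qed

lemma d1_scale: "d1 \<phi> y (c *\<^sub>R v) = c * d1 \<phi> y v"
  using linear_cmul[OF has_derivative_linear[OF d1_deriv[of y]]] by simp

lemma d2_scale2: "d2 \<phi> y v (c *\<^sub>R w) = c * d2 \<phi> y v w"
  using linear_cmul[OF has_derivative_linear[OF d2_deriv[of v y]]] by simp

lemma d3_scale3: "d3 \<phi> y v w (c *\<^sub>R l) = c * d3 \<phi> y v w l"
  using linear_cmul[OF has_derivative_linear[OF d3_deriv[of v w y]]] by simp

lemma d2_scale1: "d2 \<phi> y (c *\<^sub>R v) w = c * d2 \<phi> y v w"
proof -
  have e: "(\<lambda>z. d1 \<phi> z (c *\<^sub>R v)) = (\<lambda>z. c * d1 \<phi> z v)" by (simp add: d1_scale)
  have "((\<lambda>z. c * d1 \<phi> z v) has_derivative (\<lambda>w. c * d2 \<phi> y v w)) (at y)"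
    by (rule has_derivative_mult_right[OF d2_deriv])
  hence "(\<lambda>w. c * d2 \<phi> y v w) = frechet_derivative (\<lambda>z. d1 \<phi> z (c *\<^sub>R v)) (at y)"
    unfolding e by (rule frechet_derivative_at)
  thus ?thesis unfolding d2_def by metis
qed

lemma d3_scale1: "d3 \<phi> y (c *\<^sub>R v) w l = c * d3 \<phi> y v w l"
proof -
  have e: "(\<lambda>z. d2 \<phi> z (c *\<^sub>R v) w) = (\<lambda>z. c * d2 \<phi> z v w)" by (simp add: d2_scale1)
  have "((\<lambda>z. c * d2 \<phi> z v w) has_derivative (\<lambda>l. c * d3 \<phi> y v w l)) (at y)"
    by (rule has_derivative_mult_right[OF d3_deriv])
  hence "(\<lambda>l. c * d3 \<phi> y v w l) = frechet_derivative (\<lambda>z. d2 \<phi> z (c *\<^sub>R v) w) (at y)"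
    unfolding e by (rule frechet_derivative_at)
  thus ?thesis unfolding d3_def by metis
qed

lemma d3_scale2: "d3 \<phi> y v (c *\<^sub>R w) l = c * d3 \<phi> y v w l"
proof -
  have e: "(\<lambda>z. d2 \<phi> z v (c *\<^sub>R w)) = (\<lambda>z. c * d2 \<phi> z v w)" by (simp add: d2_scale2)
  have "((\<lambda>z. c * d2 \<phi> z v w) has_derivative (\<lambda>l. c * d3 \<phi> y v w l)) (at y)"
    by (rule has_derivative_mult_right[OF d3_deriv])
  hence "(\<lambda>l. c * d3 \<phi> y v w l) = frechet_derivative (\<lambda>z. d2 \<phi> z v (c *\<^sub>R w)) (at y)"
    unfolding e by (rule frechet_derivative_at)
  thus ?thesis unfolding d3_def by metis
qed

lemma b0: "\<bar>\<phi> y\<bar> \<le> sup0 \<phi>"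
  unfolding sup0_def using cb unfolding Cb3_def by (intro cSup_upper) auto

lemma b1u: "norm v \<le> 1 \<Longrightarrow> \<bar>d1 \<phi> y v\<bar> \<le> sup1 \<phi>"
  unfolding sup1_def using cb unfolding Cb3_def by (intro cSup_upper) auto

lemma b2u: assumes "norm v \<le> 1" "norm w \<le> 1" shows "\<bar>d2 \<phi> y v w\<bar> \<le> sup2 \<phi>"
proof -
  have bd: "bdd_above {\<bar>d2 \<phi> x h k\<bar> | x h k. norm h \<le> 1 \<and> norm k \<le> 1}"
    using cb unfolding Cb3_def by (elim conjE) assumption
  have "\<bar>d2 \<phi> y v w\<bar> \<in> {\<bar>d2 \<phi> x h k\<bar> | x h k. norm h \<le> 1 \<and> norm k \<le> 1}"
    using assms by blast
  thus ?thesis unfolding sup2_def using bd by (rule cSup_upper)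
qed

lemma b3u: assumes "norm v \<le> 1" "norm w \<le> 1" "norm l \<le> 1" shows "\<bar>d3 \<phi> y v w l\<bar> \<le> sup3 \<phi>"
proof -
  have bd: "bdd_above {\<bar>d3 \<phi> x h k l\<bar> | x h k l. norm h \<le> 1 \<and> norm k \<le> 1 \<and> norm l \<le> 1}"
    using cb unfolding Cb3_def by (elim conjE) assumption
  have "\<bar>d3 \<phi> y v w l\<bar> \<in> {\<bar>d3 \<phi> x h k l\<bar> | x h k l. norm h \<le> 1 \<and> norm k \<le> 1 \<and> norm l \<le> 1}"
    using assms by blast
  thus ?thesis unfolding sup3_def using bd by (rule cSup_upper)
qed

lemma unit_decomp: obtains u where "norm u \<le> 1" "v = norm v *\<^sub>R u"
proof (cases "v = 0")
  case True thus ?thesis using that[of 0] by simp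
next
  case False thus ?thesis using that[of "v /\<^sub>R norm v"] by simp
qed

lemma b1: "\<bar>d1 \<phi> y v\<bar> \<le> sup1 \<phi> * norm v"
proof -
  obtain u where u: "norm u \<le> 1" "v = norm v *\<^sub>R u" by (rule unit_decomp)
  have "\<bar>d1 \<phi> y v\<bar> = norm v * \<bar>d1 \<phi> y u\<bar>" by (subst u(2)) (simp add: d1_scale abs_mult)
  also have "\<dots> \<le> norm v * sup1 \<phi>" by (intro mult_left_mono b1u u) auto
  finally show ?thesis by (simp add: mult.commute)
qed

lemma b2: "\<bar>d2 \<phi> y v w\<bar> \<le> sup2 \<phi> * norm v * norm w"
proof -
  obtain u where u: "norm u \<le> 1" "v = norm v *\<^sub>R u" by (rule unit_decomp)
  obtain u' where u': "norm u' \<le> 1" "w = norm w *\<^sub>R u'" by (rule unit_decomp)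
  have "\<bar>d2 \<phi> y v w\<bar> = (norm v * norm w) * \<bar>d2 \<phi> y u u'\<bar>"
    by (subst u(2), subst u'(2)) (simp add: d2_scale1 d2_scale2 abs_mult)
  also have "\<dots> \<le> (norm v * norm w) * sup2 \<phi>" by (intro mult_left_mono b2u u u') auto
  finally show ?thesis by (simp add: mult_ac)
qed

lemma b3: "\<bar>d3 \<phi> y v w l\<bar> \<le> sup3 \<phi> * norm v * norm w * norm l"
proof -
  obtain u where u: "norm u \<le> 1" "v = norm v *\<^sub>R u" by (rule unit_decomp)
  obtain u' where u': "norm u' \<le> 1" "w = norm w *\<^sub>R u'" by (rule unit_decomp)
  obtain u'' where u'': "norm u'' \<le> 1" "l = norm l *\<^sub>R u''" by (rule unit_decomp)
  have "\<bar>d3 \<phi> y v w l\<bar> = (norm v * norm w * norm l) * \<bar>d3 \<phi> y u u' u''\<bar>"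
    by (subst u(2), subst u'(2), subst u''(2)) (simp add: d3_scale1 d3_scale2 d3_scale3 abs_mult)
  also have "\<dots> \<le> (norm v * norm w * norm l) * sup3 \<phi>" by (intro mult_left_mono b3u u u' u'') auto
  finally show ?thesis by (simp add: mult_ac)
qed

lemma s0: "0 \<le> sup0 \<phi>" using b0[of 0] by linarith
lemma s1: "0 \<le> sup1 \<phi>" using b1u[of 0 0] by simp
lemma s2: "0 \<le> sup2 \<phi>" using b2u[of 0 0 0] by simp
lemma s3: "0 \<le> sup3 \<phi>" using b3u[of 0 0 0 0] by simp


lemma lip0: "\<bar>\<phi> a - \<phi> b\<bar> \<le> sup1 \<phi> * norm (a - b)"
  using mvt[where S=UNIV and f="\<phi>" and f'="d1 \<phi>" and B="sup1 \<phi>" and a=a and b=b] d1_deriv b1 by blast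

lemma lip1: "\<bar>d1 \<phi> a l - d1 \<phi> b l\<bar> \<le> sup2 \<phi> * norm l * norm (a - b)"
  using mvt[where S=UNIV and f="\<lambda>z. d1 \<phi> z l" and f'="\<lambda>z. d2 \<phi> z l" and B="sup2 \<phi> * norm l" and a=a and b=b] d2_deriv b2 by blast

lemma lip2: "\<bar>d2 \<phi> a l w - d2 \<phi> b l w\<bar> \<le> sup3 \<phi> * norm l * norm w * norm (a - b)"
  using mvt[where S=UNIV and f="\<lambda>z. d2 \<phi> z l w" and f'="\<lambda>z. d3 \<phi> z l w" and B="sup3 \<phi> * norm l * norm w" and a=a and b=b] d3_deriv b3 by blast

lemma big:
  assumes "0 < \<delta>" "\<delta> < 1"
  shows "\<bar>(\<phi> (x' + lam) - \<phi> x') - (\<phi> (x + lam) - \<phi> x)\<bar>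
     \<le> 4 * (sup1 \<phi> powr \<delta> * sup0 \<phi> powr (1 - \<delta>)) * norm (x' - x) powr \<delta>"
proof -
  let ?D = "(\<phi> (x' + lam) - \<phi> x') - (\<phi> (x + lam) - \<phi> x)"
  have A: "\<bar>?D\<bar> \<le> 4 * sup0 \<phi>" using b0[of "x' + lam"] b0[of x'] b0[of "x + lam"] b0[of x] by linarith
  have B: "\<bar>?D\<bar> \<le> 2 * sup1 \<phi> * norm (x' - x)"
    using lip0[of "x' + lam" "x + lam"] lip0[of x' x] by (simp add: algebra_simps)
  have "\<bar>?D\<bar> \<le> (4 * sup0 \<phi>) powr (1 - \<delta>) * (2 * sup1 \<phi> * norm (x' - x)) powr \<delta>"
    by (rule interp[OF _ _ A B assms]) (use s0 s1 in auto)
  also have "\<dots> = (4 powr (1 - \<delta>) * 2 powr \<delta>) * (sup1 \<phi> powr \<delta> * sup0 \<phi> powr (1 - \<delta>)) * norm (x' - x) powr \<delta>"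
    by (simp add: powr_mult mult_ac)
  also have "\<dots> \<le> 4 * (sup1 \<phi> powr \<delta> * sup0 \<phi> powr (1 - \<delta>)) * norm (x' - x) powr \<delta>"
    by (intro mult_right_mono c4) (use assms in auto)
  finally show ?thesis .
qed

lemma small0:
  assumes "0 < \<delta>" "\<delta> < 1"
  shows "\<bar>(\<phi> (x' + lam) - \<phi> x') - (\<phi> (x + lam) - \<phi> x)\<bar>
     \<le> 2 * (sup2 \<phi> powr \<delta> * sup1 \<phi> powr (1 - \<delta>)) * norm (x' - x) powr \<delta> * norm lam"
proof -
  let ?D = "(\<phi> (x' + lam) - \<phi> x') - (\<phi> (x + lam) - \<phi> x)"
  have A: "\<bar>?D\<bar> \<le> 2 * sup1 \<phi> * norm lam"
    using lip0[of "x' + lam" "x'"] lip0[of "x + lam" x] by simp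
  have kd: "((\<lambda>y. \<phi> (y + lam) - \<phi> y) has_derivative (\<lambda>l. d1 \<phi> (y + lam) l - d1 \<phi> y l)) (at y)" for y
    by (intro has_derivative_diff shiftd d1_deriv)
  have "\<bar>(\<phi> (x' + lam) - \<phi> x') - (\<phi> (x + lam) - \<phi> x)\<bar> \<le> (sup2 \<phi> * norm lam) * norm (x' - x)"
  proof (rule mvt[where S=UNIV and f="\<lambda>y. \<phi> (y + lam) - \<phi> y", OF _ kd])
    fix y l
    show "\<bar>d1 \<phi> (y + lam) l - d1 \<phi> y l\<bar> \<le> sup2 \<phi> * norm lam * norm l"
      using lip1[of "y + lam" l y] by (simp add: mult_ac)
  qed auto
  hence B: "\<bar>?D\<bar> \<le> sup2 \<phi> * norm (x' - x) * norm lam" by (simp add: mult_ac)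
  have "\<bar>?D\<bar> \<le> (2 * sup1 \<phi> * norm lam) powr (1 - \<delta>) * (sup2 \<phi> * norm (x' - x) * norm lam) powr \<delta>"
    by (rule interp[OF _ _ A B assms]) (use s1 s2 in auto)
  also have "\<dots> = 2 powr (1 - \<delta>) * (sup2 \<phi> powr \<delta> * sup1 \<phi> powr (1 - \<delta>)) * norm (x' - x) powr \<delta>
      * (norm lam powr (1 - \<delta>) * norm lam powr \<delta>)"
    by (simp add: powr_mult mult_ac)
  also have "\<dots> = 2 powr (1 - \<delta>) * (sup2 \<phi> powr \<delta> * sup1 \<phi> powr (1 - \<delta>)) * norm (x' - x) powr \<delta> * norm lam"
    by (simp add: pw)
  also have "\<dots> \<le> 2 * (sup2 \<phi> powr \<delta> * sup1 \<phi> powr (1 - \<delta>)) * norm (x' - x) powr \<delta> * norm lam"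
    by (intro mult_right_mono c2) (use assms in auto)
  finally show ?thesis .
qed

lemma small1:
  assumes "0 < \<delta>" "\<delta> < 1"
  shows "\<bar>(\<phi> (x' + lam) - \<phi> x' - d1 \<phi> x' lam) - (\<phi> (x + lam) - \<phi> x - d1 \<phi> x lam)\<bar>
     \<le> 2 * (sup3 \<phi> powr \<delta> * sup2 \<phi> powr (1 - \<delta>)) * norm (x' - x) powr \<delta> * (norm lam)\<^sup>2"
proof -
  let ?m = "norm lam"
  define P where "P \<mu> = (\<phi> (x' + \<mu>) - \<phi> x' - d1 \<phi> x' \<mu>) - (\<phi> (x + \<mu>) - \<phi> x - d1 \<phi> x \<mu>)" for \<mu>
  define P' where "P' \<mu> l = (d1 \<phi> (x' + \<mu>) l - d1 \<phi> x' l) - (d1 \<phi> (x + \<mu>) l - d1 \<phi> x l)" for \<mu> l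
  have lin: "bounded_linear (d1 \<phi> y)" for y using d1_deriv has_derivative_bounded_linear by blast
  have Pd: "(P has_derivative P' \<mu>) (at \<mu>)" for \<mu>
  proof -
    have "(P has_derivative (\<lambda>l. ((d1 \<phi> (x' + \<mu>) l - 0) - d1 \<phi> x' l) - ((d1 \<phi> (x + \<mu>) l - 0) - d1 \<phi> x l))) (at \<mu>)"
      unfolding P_def
      by (intro has_derivative_diff shiftd2[where g=\<phi>, OF d1_deriv] has_derivative_const
        bounded_linear_imp_has_derivative lin)
    moreover have "(\<lambda>l. ((d1 \<phi> (x' + \<mu>) l - 0) - d1 \<phi> x' l) - ((d1 \<phi> (x + \<mu>) l - 0) - d1 \<phi> x l)) = P' \<mu>"
      by (simp add: P'_def fun_eq_iff)
    ultimately show ?thesis by simp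
  qed
  have d10: "d1 \<phi> y 0 = 0" for y using d1_scale[of y 0 0] by simp
  have P0: "P 0 = 0" by (simp add: P_def d10)
  have "\<bar>P lam - P 0\<bar> \<le> (2 * sup2 \<phi> * ?m) * norm (lam - 0)"
  proof (rule mvt[where S="cball 0 ?m" and f'=P', OF _ Pd])
    fix \<mu> l :: 'a assume "\<mu> \<in> cball 0 ?m"
    hence mu: "norm \<mu> \<le> ?m" by simp
    have "\<bar>P' \<mu> l\<bar> \<le> sup2 \<phi> * norm l * norm \<mu> + sup2 \<phi> * norm l * norm \<mu>"
      using lip1[of "x' + \<mu>" l x', simplified] lip1[of "x + \<mu>" l x, simplified]
        abs_triangle_ineq4[of "d1 \<phi> (x' + \<mu>) l - d1 \<phi> x' l" "d1 \<phi> (x + \<mu>) l - d1 \<phi> x l"]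
      unfolding P'_def by linarith
    also have "\<dots> \<le> 2 * sup2 \<phi> * ?m * norm l"
      using mult_left_mono[OF mu, of "sup2 \<phi> * norm l"] s2 by (simp add: mult_ac)
    finally show "\<bar>P' \<mu> l\<bar> \<le> 2 * sup2 \<phi> * ?m * norm l" .
  qed auto
  hence A: "\<bar>P lam\<bar> \<le> 2 * sup2 \<phi> * ?m\<^sup>2" by (simp add: P0 power2_eq_square mult_ac)
  have "\<bar>P lam - P 0\<bar> \<le> (sup3 \<phi> * norm (x' - x) * ?m) * norm (lam - 0)"
  proof (rule mvt[where S="cball 0 ?m" and f'=P', OF _ Pd])
    fix \<mu> l :: 'a assume "\<mu> \<in> cball 0 ?m"
    hence mu: "norm \<mu> \<le> ?m" by simp
    have kd: "((\<lambda>y. d1 \<phi> (y + \<mu>) l - d1 \<phi> y l) has_derivative (\<lambda>w. d2 \<phi> (y + \<mu>) l w - d2 \<phi> y l w)) (at y)" for y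
      by (intro has_derivative_diff shiftd[where g="\<lambda>z. d1 \<phi> z l"] d2_deriv)
    have "\<bar>(d1 \<phi> (x' + \<mu>) l - d1 \<phi> x' l) - (d1 \<phi> (x + \<mu>) l - d1 \<phi> x l)\<bar>
        \<le> (sup3 \<phi> * norm l * norm \<mu>) * norm (x' - x)"
    proof (rule mvt[where S=UNIV and f="\<lambda>y. d1 \<phi> (y + \<mu>) l - d1 \<phi> y l", OF _ kd])
      fix y w
      show "\<bar>d2 \<phi> (y + \<mu>) l w - d2 \<phi> y l w\<bar> \<le> sup3 \<phi> * norm l * norm \<mu> * norm w"
        using lip2[of "y + \<mu>" l w y] by (simp add: mult_ac)
    qed auto
    also have "\<dots> \<le> (sup3 \<phi> * norm l * ?m) * norm (x' - x)"
      using s3 mu by (intro mult_right_mono mult_left_mono) auto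
    finally show "\<bar>P' \<mu> l\<bar> \<le> sup3 \<phi> * norm (x' - x) * ?m * norm l"
      unfolding P'_def by (simp add: mult_ac)
  qed auto
  hence B: "\<bar>P lam\<bar> \<le> sup3 \<phi> * norm (x' - x) * ?m\<^sup>2" by (simp add: P0 power2_eq_square mult_ac)
  have "\<bar>P lam\<bar> \<le> (2 * sup2 \<phi> * ?m\<^sup>2) powr (1 - \<delta>) * (sup3 \<phi> * norm (x' - x) * ?m\<^sup>2) powr \<delta>"
    by (rule interp[OF _ _ A B assms]) (use s2 s3 in auto)
  also have "\<dots> = 2 powr (1 - \<delta>) * (sup3 \<phi> powr \<delta> * sup2 \<phi> powr (1 - \<delta>)) * norm (x' - x) powr \<delta>
      * ((?m\<^sup>2) powr (1 - \<delta>) * (?m\<^sup>2) powr \<delta>)"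
    by (simp only: powr_mult mult_ac)
  also have "\<dots> = 2 powr (1 - \<delta>) * (sup3 \<phi> powr \<delta> * sup2 \<phi> powr (1 - \<delta>)) * norm (x' - x) powr \<delta> * ?m\<^sup>2"
    by (subst pw) auto
  also have "\<dots> \<le> 2 * (sup3 \<phi> powr \<delta> * sup2 \<phi> powr (1 - \<delta>)) * norm (x' - x) powr \<delta> * ?m\<^sup>2"
    by (intro mult_right_mono c2) (use assms in auto)
  finally show ?thesis unfolding P_def .
qed


lemma pointwise:
  assumes "0 < \<alpha>" "\<alpha> \<le> 1" "0 < \<delta>" "\<delta> < \<alpha>"
  shows "\<bar>delta_op \<alpha> \<phi> lam x' - delta_op \<alpha> \<phi> lam x\<bar>
    \<le> Calpha \<alpha> \<delta> \<phi> * dist x' x powr \<delta> * (if \<alpha> = 1 then min ((norm lam)\<^sup>2) 1 else min (norm lam) 1)"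
proof -
  have d1: "\<delta> < 1" using assms by linarith
  let ?h = "norm (x' - x) powr \<delta>"
  have dh: "dist x' x powr \<delta> = ?h" by (simp add: dist_norm)
  have h0: "0 \<le> ?h" by simp
  let ?T1 = "4 * (sup1 \<phi> powr \<delta> * sup0 \<phi> powr (1 - \<delta>))"
  have T1: "0 \<le> ?T1" by simp
  show ?thesis
  proof (cases "\<alpha> = 1")
    case True
    let ?T2 = "2 * (sup3 \<phi> powr \<delta> * sup2 \<phi> powr (1 - \<delta>))"
    have T2: "0 \<le> ?T2" by simp
    have Ce: "Calpha 1 \<delta> \<phi> = ?T1 + ?T2" by (simp add: Calpha_def mult_ac)
    show ?thesis
    proof (cases "norm lam \<le> 1")
      case True
      have m: "(norm lam)\<^sup>2 \<le> 1" using True by (simp add: power_le_one)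
      have "\<bar>delta_op \<alpha> \<phi> lam x' - delta_op \<alpha> \<phi> lam x\<bar> \<le> ?T2 * ?h * (norm lam)\<^sup>2"
        using small1[OF assms(3) d1, of x' lam x] True \<open>\<alpha> = 1\<close> by (simp add: delta_op_def)
      also have "\<dots> \<le> (?T1 + ?T2) * ?h * (norm lam)\<^sup>2"
        using T1 h0 by (intro mult_right_mono) auto
      finally show ?thesis using m \<open>\<alpha> = 1\<close> by (simp add: Ce dh min_def)
    next
      case False
      have m: "\<not> (norm lam)\<^sup>2 \<le> 1" using False by (simp add: abs_le_iff power_le_one_iff)
      have "\<bar>delta_op \<alpha> \<phi> lam x' - delta_op \<alpha> \<phi> lam x\<bar> \<le> ?T1 * ?h"
        using big[OF assms(3) d1, of x' lam x] False \<open>\<alpha> = 1\<close> by (simp add: delta_op_def)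
      also have "\<dots> \<le> (?T1 + ?T2) * ?h"
        using T2 h0 by (intro mult_right_mono) auto
      finally show ?thesis using m \<open>\<alpha> = 1\<close> by (simp add: Ce dh min_def)
    qed
  next
    case False
    let ?T2 = "2 * (sup2 \<phi> powr \<delta> * sup1 \<phi> powr (1 - \<delta>))"
    have T2: "0 \<le> ?T2" by simp
    have Ce: "Calpha \<alpha> \<delta> \<phi> = ?T1 + ?T2" using False by (simp add: Calpha_def mult_ac)
    show ?thesis
    proof (cases "norm lam \<le> 1")
      case True
      have "\<bar>delta_op \<alpha> \<phi> lam x' - delta_op \<alpha> \<phi> lam x\<bar> \<le> ?T2 * ?h * norm lam"
        using small0[OF assms(3) d1, of x' lam x] \<open>\<alpha> \<noteq> 1\<close> by (simp add: delta_op_def)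
      also have "\<dots> \<le> (?T1 + ?T2) * ?h * norm lam"
        using T1 h0 by (intro mult_right_mono) auto
      finally show ?thesis using True \<open>\<alpha> \<noteq> 1\<close> by (simp add: Ce dh min_def)
    next
      case False
      have "\<bar>delta_op \<alpha> \<phi> lam x' - delta_op \<alpha> \<phi> lam x\<bar> \<le> ?T1 * ?h"
        using big[OF assms(3) d1, of x' lam x] \<open>\<alpha> \<noteq> 1\<close> by (simp add: delta_op_def)
      also have "\<dots> \<le> (?T1 + ?T2) * ?h"
        using T2 h0 by (intro mult_right_mono) auto
      finally show ?thesis using False \<open>\<alpha> \<noteq> 1\<close> by (simp add: Ce dh min_def)
    qed
  qed
qed

lemma Calpha_nonneg: "0 \<le> Calpha \<alpha> \<delta> \<phi>"
  by (simp add: Calpha_def)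

end

theorem lemma4p3:
  fixes \<phi> :: "'a::euclidean_space \<Rightarrow> real"
    and \<alpha> \<delta> \<Lambda>l \<Lambda>u :: real and x x' :: 'a
  assumes "0 < \<alpha>" "\<alpha> \<le> 1" "0 < \<delta>" "\<delta> < \<alpha>"
    and "0 < \<Lambda>l" "0 < \<Lambda>u"
    and "Cb3 \<phi>"
  shows "(SUP F\<in>(Lset \<alpha> \<Lambda>l \<Lambda>u :: 'a measure set).
            \<integral>\<^sup>+ lam. ennreal \<bar>delta_op \<alpha> \<phi> lam x' - delta_op \<alpha> \<phi> lam x\<bar> \<partial>F)
         \<le> Kconst \<alpha> \<Lambda>l \<Lambda>u TYPE('a) * ennreal (Calpha \<alpha> \<delta> \<phi>) * ennreal (dist x' x powr \<delta>)"
proof -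
  define m where "m lam = (if \<alpha> = 1 then min ((norm lam)\<^sup>2) 1 else min (norm lam) 1)" for lam :: 'a
  define C where "C = Calpha \<alpha> \<delta> \<phi> * dist x' x powr \<delta>"
  have C0: "0 \<le> C" unfolding C_def using Calpha_nonneg[OF assms(7)] by simp
  have m0: "0 \<le> m lam" for lam by (simp add: m_def)
  have pt: "ennreal \<bar>delta_op \<alpha> \<phi> lam x' - delta_op \<alpha> \<phi> lam x\<bar> \<le> ennreal C * ennreal (m lam)" for lam
  proof -
    have "\<bar>delta_op \<alpha> \<phi> lam x' - delta_op \<alpha> \<phi> lam x\<bar> \<le> C * m lam"
      using pointwise[OF assms(7) assms(1-4)] unfolding C_def m_def .
    hence "ennreal \<bar>delta_op \<alpha> \<phi> lam x' - delta_op \<alpha> \<phi> lam x\<bar> \<le> ennreal (C * m lam)"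
      by (rule ennreal_leI)
    thus ?thesis using C0 m0 by (simp add: ennreal_mult)
  qed
  show ?thesis
  proof (rule SUP_least)
    fix F assume F: "F \<in> (Lset \<alpha> \<Lambda>l \<Lambda>u :: 'a measure set)"
    then obtain \<mu> where Fe: "F = Fmu \<alpha> \<mu>" unfolding Lset_def by blast
    have sF: "sets F = sets borel" by (simp add: Fe Fmu_def)
    have mb: "(\<lambda>lam. ennreal (m lam)) \<in> borel_measurable borel"
      unfolding m_def by measurable
    have meas: "(\<lambda>lam. ennreal (m lam)) \<in> borel_measurable F"
      by (subst measurable_cong_sets[OF sF refl]) (rule mb)
    have int_le: "(\<integral>\<^sup>+ lam. ennreal (m lam) \<partial>F) \<le> Kconst \<alpha> \<Lambda>l \<Lambda>u TYPE('a)"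
    proof (cases "\<alpha> = 1")
      case True
      have "(\<integral>\<^sup>+ lam. ennreal (m lam) \<partial>F) = (\<integral>\<^sup>+ lam. ennreal (min ((norm lam)\<^sup>2) 1) \<partial>F)"
        using True by (simp add: m_def)
      also have "\<dots> \<le> (SUP F\<in>(Lset \<alpha> \<Lambda>l \<Lambda>u :: 'a measure set). \<integral>\<^sup>+ lam. ennreal (min ((norm lam)\<^sup>2) 1) \<partial>F)"
        by (rule SUP_upper[OF F])
      finally show ?thesis using True by (simp add: Kconst_def)
    next
      case False
      have "(\<integral>\<^sup>+ lam. ennreal (m lam) \<partial>F) = (\<integral>\<^sup>+ lam. ennreal (min (norm lam) 1) \<partial>F)"
        using False by (simp add: m_def)
      also have "\<dots> \<le> (SUP F\<in>(Lset \<alpha> \<Lambda>l \<Lambda>u :: 'a measure set). \<integral>\<^sup>+ lam. ennreal (min (norm lam) 1) \<partial>F)"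
        by (rule SUP_upper[OF F])
      finally show ?thesis using False by (simp add: Kconst_def)
    qed
    have "(\<integral>\<^sup>+ lam. ennreal \<bar>delta_op \<alpha> \<phi> lam x' - delta_op \<alpha> \<phi> lam x\<bar> \<partial>F)
        \<le> (\<integral>\<^sup>+ lam. ennreal C * ennreal (m lam) \<partial>F)"
      by (rule nn_integral_mono) (rule pt)
    also have "\<dots> = ennreal C * (\<integral>\<^sup>+ lam. ennreal (m lam) \<partial>F)"
      by (rule nn_integral_cmult[OF meas])
    also have "\<dots> \<le> ennreal C * Kconst \<alpha> \<Lambda>l \<Lambda>u TYPE('a)"
      by (rule mult_left_mono[OF int_le]) simp
    also have "\<dots> = Kconst \<alpha> \<Lambda>l \<Lambda>u TYPE('a) * ennreal (Calpha \<alpha> \<delta> \<phi>) * ennreal (dist x' x powr \<delta>)"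
      unfolding C_def using Calpha_nonneg[OF assms(7)] by (simp add: ennreal_mult mult_ac)
    finally show "(\<integral>\<^sup>+ lam. ennreal \<bar>delta_op \<alpha> \<phi> lam x' - delta_op \<alpha> \<phi> lam x\<bar> \<partial>F)
        \<le> Kconst \<alpha> \<Lambda>l \<Lambda>u TYPE('a) * ennreal (Calpha \<alpha> \<delta> \<phi>) * ennreal (dist x' x powr \<delta>)" .
  qed
qed

end
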